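(* Let $A\in\mathrm{SL}(2,\mathbb R)$. If $A\Lambda_q$ contains both $(1,0)^T$ and $(0,1)^T$, then $A\in G_q$ and in particular $A\Lambda_q=\Lambda_q$. Consequently: (1) for $B\in\mathrm{SL}(2,\mathbb R)$, $B\Lambda_q=\Lambda_q$ if and only if $B\in G_q$; hence the sets $C\Lambda_q$, $C\in\mathrm{SL}(2,\mathbb R)$, are in bijection with $\mathrm{SL}(2,\mathbb R)/G_q$ via $C\Lambda_q\leftrightarrow CG_q$; (2) for $B\in\mathrm{SL}(2,\mathbb R)$, if $B\Lambda_q$ contains a horizontal vector $(a,0)^T$ with $a>0$, then there exists $b\in\mathbb R$ with $B\Lambda_q=g_{a,b}\Lambda_q$.
   Context: Fix an integer $q\ge3$, let $\lambda_q=2\cos(\pi/q)$, and let $G_q\subset \mathrm{SL}(2,\mathbb R)$ be the Hecke triangle group generated by $S=\begin{pmatrix}0&-1\\1&0\end{pmatrix}$ and $T_q=\begin{pmatrix}1&\lambda_q\\0&1\end{pmatrix}$, acting linearly on $\mathbb R^2$. Set $\Lambda_q=G_q(1,0)^T$, and for $A\in\mathrm{SL}(2,\mathbb R)$ write $A\Lambda_q=\{A\mathbf v:\mathbf v\in\Lambda_q\}$. For $a>0$, $b\in\mathbb R$, $g_{a,b}=\begin{pmatrix}a&b\\0&a^{-1}\end{pmatrix}$. *)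

theory Defs
  imports "HOL-Analysis.Analysis"
begin

type_synonym mat2 = "real^2^2"

definition mat2 :: "real \<Rightarrow> real \<Rightarrow> real \<Rightarrow> real \<Rightarrow> mat2" where
  "mat2 a b c d = vector [vector [a, b], vector [c, d]]"

definition vec2 :: "real \<Rightarrow> real \<Rightarrow> real^2" where
  "vec2 x y = vector [x, y]"

definition SL2 :: "mat2 set" where
  "SL2 = {A. det A = 1}"

definition lambda_q :: "nat \<Rightarrow> real" where
  "lambda_q q = 2 * cos (pi / real q)"

definition S_mat :: mat2 where
  "S_mat = mat2 0 (-1) 1 0"

definition T_mat :: "nat \<Rightarrow> mat2" where
  "T_mat q = mat2 1 (lambda_q q) 0 1"

inductive_set hecke_group :: "nat \<Rightarrow> mat2 set" for q :: nat where
  one: "mat 1 \<in> hecke_group q"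
| S: "S_mat \<in> hecke_group q"
| S_inv: "matrix_inv S_mat \<in> hecke_group q"
| T: "T_mat q \<in> hecke_group q"
| T_inv: "matrix_inv (T_mat q) \<in> hecke_group q"
| mult: "A \<in> hecke_group q \<Longrightarrow> B \<in> hecke_group q \<Longrightarrow> A ** B \<in> hecke_group q"

definition Lambda_q :: "nat \<Rightarrow> (real^2) set" where
  "Lambda_q q = {A *v vec2 1 0 | A. A \<in> hecke_group q}"

definition mat_image :: "mat2 \<Rightarrow> (real^2) set \<Rightarrow> (real^2) set" where
  "mat_image A X = (\<lambda>v. A *v v) ` X"

definition left_coset :: "mat2 \<Rightarrow> mat2 set \<Rightarrow> mat2 set" where
  "left_coset C G = (\<lambda>g. C ** g) ` G"

definition g_ab :: "real \<Rightarrow> real \<Rightarrow> mat2" where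
  "g_ab a b = mat2 a b 0 (inverse a)"

end

theory Submission imports Defs begin

lemma mat2_nth[simp]: "mat2 a b c d $ 1 $ 1 = a" "mat2 a b c d $ 1 $ 2 = b"
  "mat2 a b c d $ 2 $ 1 = c" "mat2 a b c d $ 2 $ 2 = d"
  by (simp_all add: mat2_def)
lemma vec2_nth[simp]: "vec2 x y $ 1 = x" "vec2 x y $ 2 = y"
  by (simp_all add: vec2_def)

lemma mat2_eta: "M = mat2 (M$1$1) (M$1$2) (M$2$1) (M$2$2)"
  unfolding vec_eq_iff forall_2 by simp
lemma vec2_eta: "v = vec2 (v$1) (v$2)"
  unfolding vec_eq_iff forall_2 by simp

lemma mat2_eq_iff: "mat2 a b c d = mat2 a' b' c' d' \<longleftrightarrow> a=a' \<and> b=b' \<and> c=c' \<and> d=d'"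
  by (metis mat2_nth)
lemma vec2_eq_iff: "vec2 a b = vec2 a' b' \<longleftrightarrow> a=a' \<and> b=b'"
  by (metis vec2_nth)

lemma mat2_mult: "mat2 a b c d ** mat2 a' b' c' d' = mat2 (a*a'+b*c') (a*b'+b*d') (c*a'+d*c') (c*b'+d*d')"
  unfolding vec_eq_iff forall_2 by (simp add: matrix_matrix_mult_def sum_2)
lemma mat2_vec2: "mat2 a b c d *v vec2 x y = vec2 (a*x+b*y) (c*x+d*y)"
  unfolding vec_eq_iff forall_2 by (simp add: matrix_vector_mult_def sum_2)
lemma mat1_mat2: "(mat 1 :: mat2) = mat2 1 0 0 1"
  unfolding vec_eq_iff forall_2 by (simp add: mat_def)
lemma det_mat2: "det (mat2 a b c d) = a*d - b*c"
  by (simp add: det_2)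

lemma matrix_inv_eq:
  fixes A B :: mat2
  assumes "A ** B = mat 1" "B ** A = mat 1"
  shows "matrix_inv A = B"
proof -
  have ex: "\<exists>A'. A ** A' = mat 1 \<and> A' ** A = mat 1" using assms by blast
  define C where "C = matrix_inv A"
  have C: "A ** C = mat 1 \<and> C ** A = mat 1" unfolding C_def matrix_inv_def by (rule someI_ex[OF ex])
  have "C = C ** (A ** B)" using assms by simp
  also have "\<dots> = (C ** A) ** B" by (simp add: matrix_mul_assoc)
  also have "\<dots> = B" using C by simp
  finally show ?thesis unfolding C_def .
qed

lemma S_inv: "matrix_inv S_mat = mat2 0 1 (-1) 0"
  by (rule matrix_inv_eq) (simp_all add: S_mat_def mat2_mult mat1_mat2)
lemma T_inv: "matrix_inv (T_mat q) = mat2 1 (- lambda_q q) 0 1"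
  by (rule matrix_inv_eq) (simp_all add: T_mat_def mat2_mult mat1_mat2)


definition sq :: "nat \<Rightarrow> nat \<Rightarrow> real" where
  "sq q k = sin (real k * pi / real q) / sin (pi / real q)"

definition K :: "real \<Rightarrow> bool" where "K x \<longleftrightarrow> x = 0 \<or> x \<ge> 1"

lemma sq_rec: "sq q (k+2) + sq q k = lambda_q q * sq q (k+1)"
proof -
  define t where "t = pi / real q"
  define x where "x = real (k+1) * t"
  have 1: "real (k+2) * pi / real q = x + t" unfolding x_def t_def by (cases "q=0") (simp_all add: field_simps)
  have 2: "real k * pi / real q = x - t" unfolding x_def t_def by (cases "q=0") (simp_all add: field_simps)
  have 3: "real (k+1) * pi / real q = x" unfolding x_def t_def by (cases "q=0") (simp_all add: field_simps)
  have "sin (x+t) + sin (x-t) = 2 * cos t * sin x" by (simp add: sin_add sin_diff)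
  then show ?thesis unfolding sq_def lambda_q_def 1 2 3 t_def[symmetric]
    by (simp add: add_divide_distrib[symmetric])
qed

lemma sin_t_pos: "q \<ge> 2 \<Longrightarrow> sin (pi / real q) > 0"
  by (rule sin_gt_zero) (auto simp: field_simps)

lemma sq0[simp]: "sq q 0 = 0" by (simp add: sq_def)
lemma sq1: "q \<ge> 2 \<Longrightarrow> sq q 1 = 1" using sin_t_pos[of q] by (simp add: sq_def)
lemma sq2: "q \<ge> 2 \<Longrightarrow> sq q 2 = lambda_q q" using sq_rec[of q 0] sq1[of q] by (simp add: numeral_2_eq_2)
lemma sqq: "q \<ge> 2 \<Longrightarrow> sq q q = 0" by (simp add: sq_def)
lemma sqq1: "q \<ge> 2 \<Longrightarrow> sq q (q-1) = 1"
proof -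
  assume q: "q \<ge> 2"
  have "real (q-1) * pi / real q = pi - pi / real q" using q by (simp add: of_nat_diff field_simps)
  then show ?thesis using sin_t_pos[OF q] by (simp add: sq_def)
qed
lemma sqSq: "q \<ge> 2 \<Longrightarrow> sq q (Suc q) = -1"
  using sq_rec[of q "q-1"] sqq[of q] sqq1[of q] by (simp add: Suc_diff_le numeral_2_eq_2)

lemma sin_ge: assumes "0 < t" "t \<le> pi/2" "t \<le> x" "x \<le> pi - t" shows "sin t \<le> sin x"
proof (cases "x \<le> pi/2")
  case True then show ?thesis using assms by (subst sin_mono_le_eq) auto
next
  case False
  have "sin x = sin (pi - x)" by simp
  moreover have "sin t \<le> sin (pi - x)" using assms False by (subst sin_mono_le_eq) auto
  ultimately show ?thesis by simp
qed

lemma sq_ge1: assumes "q \<ge> 2" "1 \<le> k" "k \<le> q - 1" shows "sq q k \<ge> 1"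
proof -
  define t where "t = pi / real q"
  have tp: "0 < t" unfolding t_def using assms by simp
  have t2: "t \<le> pi/2" unfolding t_def using assms by (simp add: field_simps)
  have k1: "real k \<ge> 1" using assms by simp
  have k2: "real k \<le> real q - 1" using assms by linarith
  have a: "t \<le> real k * t" using tp k1 by simp
  have "real k * t \<le> (real q - 1) * t" using k2 tp by (simp add: mult_right_mono)
  also have "\<dots> = pi - t" unfolding t_def using assms by (simp add: field_simps)
  finally have b: "real k * t \<le> pi - t" .
  have "sin t \<le> sin (real k * t)" by (rule sin_ge[OF tp t2 a b])
  moreover have "sin t > 0" using sin_t_pos[OF assms(1)] t_def by simp
  moreover have "real k * pi / real q = real k * t" unfolding t_def by simp
  ultimately show ?thesis unfolding sq_def t_def[symmetric] by simp
qed

lemma sqK: assumes "q \<ge> 2" "k \<le> q" shows "K (sq q k)"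
proof -
  consider "k = 0" | "k = q" | "1 \<le> k \<and> k \<le> q - 1" using assms by linarith
  then show ?thesis unfolding K_def using sq_ge1[OF assms(1)] sqq[OF assms(1)] by cases auto
qed

lemma K_add: "K x \<Longrightarrow> K y \<Longrightarrow> K (x+y)" unfolding K_def by auto
lemma K_mult: "K x \<Longrightarrow> K y \<Longrightarrow> K (x*y)" unfolding K_def
proof (elim disjE)
  assume "1 \<le> x" "1 \<le> y" then have "1 * 1 \<le> x * y" by (intro mult_mono) auto
  then show "x * y = 0 \<or> 1 \<le> x * y" by simp
qed auto

lemma lambda_bounds: "q \<ge> 3 \<Longrightarrow> 1 \<le> lambda_q q \<and> lambda_q q < 2"
proof -
  assume q: "q \<ge> 3"
  have t: "0 < pi / real q" "pi / real q \<le> pi / 3" using q by (auto simp: field_simps)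
  have "cos (pi/3) \<le> cos (pi / real q)" using t by (intro cos_monotone_0_pi_le) auto
  moreover have "cos (pi / real q) < cos 0" using t
  proof (intro cos_monotone_0_pi)
    have "pi * 1 \<le> pi * real q" using q by (intro mult_left_mono) auto
    then show "pi / real q \<le> pi" using q by (simp add: field_simps)
  qed (use t in auto)
  ultimately show ?thesis by (simp add: lambda_q_def cos_60)
qed


definition inv2 :: "mat2 \<Rightarrow> mat2" where
  "inv2 M = mat2 (M$2$2) (-M$1$2) (-M$2$1) (M$1$1)"

lemma inv2_mat2[simp]: "inv2 (mat2 a b c d) = mat2 d (-b) (-c) a" by (simp add: inv2_def)

lemma mult_entries: fixes A B :: mat2 shows "(A ** B) = mat2 (A$1$1*B$1$1+A$1$2*B$2$1) (A$1$1*B$1$2+A$1$2*B$2$2)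
   (A$2$1*B$1$1+A$2$2*B$2$1) (A$2$1*B$1$2+A$2$2*B$2$2)"
  unfolding vec_eq_iff forall_2 by (simp add: matrix_matrix_mult_def sum_2)

lemma inv2_mult: "inv2 (A ** B) = inv2 B ** inv2 A"
  by (simp add: mult_entries inv2_def mat2_eq_iff algebra_simps)

lemma inv2_right: "det M = 1 \<Longrightarrow> M ** inv2 M = mat 1"
  by (simp add: mult_entries inv2_def mat1_mat2 det_2 mat2_eq_iff algebra_simps)
lemma inv2_left: "det M = 1 \<Longrightarrow> inv2 M ** M = mat 1"
  by (simp add: mult_entries inv2_def mat1_mat2 det_2 mat2_eq_iff algebra_simps)
lemma S_inv': "matrix_inv (mat2 0 (-1) 1 0) = mat2 0 1 (-1) 0" using S_inv by (simp add: S_mat_def)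
lemma T_inv': "matrix_inv (mat2 1 (lambda_q q) 0 1) = mat2 1 (- lambda_q q) 0 1" using T_inv by (simp add: T_mat_def)

lemma G_det: "A \<in> hecke_group q \<Longrightarrow> det A = 1"
  by (induction rule: hecke_group.induct)
     (simp_all add: det_mul S_inv' T_inv' S_mat_def T_mat_def det_mat2 mat1_mat2)

lemma G_inv: "A \<in> hecke_group q \<Longrightarrow> inv2 A \<in> hecke_group q"
proof (induction rule: hecke_group.induct)
  case one then show ?case by (simp add: mat1_mat2 hecke_group.one[unfolded mat1_mat2])
next
  case S
  have "inv2 S_mat = matrix_inv S_mat" by (simp add: S_inv' S_mat_def)
  then show ?case by (simp add: hecke_group.S_inv)
next
  case S_inv
  have "inv2 (matrix_inv S_mat) = S_mat" by (simp add: S_inv' S_mat_def)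
  then show ?case by (simp add: hecke_group.S)
next
  case T
  have "inv2 (T_mat q) = matrix_inv (T_mat q)" by (simp add: T_inv' T_mat_def)
  then show ?case by (simp add: hecke_group.T_inv)
next
  case T_inv
  have "inv2 (matrix_inv (T_mat q)) = T_mat q" by (simp add: T_inv' T_mat_def)
  then show ?case by (simp add: hecke_group.T)
next
  case (mult A B) then show ?case by (simp add: inv2_mult hecke_group.mult)
qed

lemma Tpow_nat: "mat2 1 (real n * lambda_q q) 0 1 \<in> hecke_group q"
proof (induction n)
  case 0 then show ?case using hecke_group.one[of q] by (simp add: mat1_mat2)
next
  case (Suc n)
  have "T_mat q ** mat2 1 (real n * lambda_q q) 0 1 = mat2 1 (real (Suc n) * lambda_q q) 0 1"
    by (simp add: T_mat_def mat2_mult algebra_simps)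
  then show ?case using hecke_group.mult[OF hecke_group.T Suc] by simp
qed

lemma Tpow_nat': "mat2 1 (- real n * lambda_q q) 0 1 \<in> hecke_group q"
  using G_inv[OF Tpow_nat[of n q]] by simp

lemma Tpow: "mat2 1 (real_of_int m * lambda_q q) 0 1 \<in> hecke_group q"
proof (cases "m \<ge> 0")
  case True then show ?thesis using Tpow_nat[of "nat m" q] by simp
next
  case False then show ?thesis using Tpow_nat'[of "nat (-m)" q] by simp
qed

lemma S_G: "mat2 0 (-1) 1 0 \<in> hecke_group q" using hecke_group.S[of q] by (simp add: S_mat_def)


inductive_set Orb :: "nat \<Rightarrow> (real \<times> real) set" for q :: nat where
  e1: "(1,0) \<in> Orb q"
| e2: "(0,1) \<in> Orb q"
| M: "(a,c) \<in> Orb q \<Longrightarrow> 1 \<le> j \<Longrightarrow> j \<le> q - 1 \<Longrightarrow>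
      (sq q j * a + sq q (j+1) * c, sq q (j-1) * a + sq q j * c) \<in> Orb q"

lemma Orb_K: "(a,c) \<in> Orb q \<Longrightarrow> q \<ge> 3 \<Longrightarrow> K a \<and> K c"
proof (induction rule: Orb.induct)
  case (M a c j)
  have "K (sq q j)" "K (sq q (j+1))" "K (sq q (j-1))" using M.prems M.hyps by (auto intro!: sqK)
  then show ?case using M.IH M.prems by (auto intro!: K_add K_mult)
qed (auto simp: K_def)

lemma sqqm2: assumes "q \<ge> 2" shows "sq q (q-2) = lambda_q q"
proof -
  obtain p where p: "q = p + 2" using assms by (metis add.commute le_Suc_ex)
  have "sq q (p+2) + sq q p = lambda_q q * sq q (p+1)" by (rule sq_rec)
  moreover have "sq q (p+2) = 0" using sqq[of q] p by simp
  moreover have "sq q (p+1) = 1" using sqq1[of q] p assms by simp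
  ultimately show ?thesis using p by simp
qed

definition Vs :: "nat \<Rightarrow> (real^2) set" where
  "Vs q = {vec2 a c | a c. (a,c) \<in> Orb q \<or> (-a,-c) \<in> Orb q \<or> (c,-a) \<in> Orb q \<or> (-c,a) \<in> Orb q}"

lemma Vs_iff: "vec2 a c \<in> Vs q \<longleftrightarrow> ((a,c) \<in> Orb q \<or> (-a,-c) \<in> Orb q \<or> (c,-a) \<in> Orb q \<or> (-c,a) \<in> Orb q)"
  by (auto simp: Vs_def vec2_eq_iff)

lemma Vs_K: assumes "vec2 a c \<in> Vs q" "q \<ge> 3" shows "K \<bar>a\<bar> \<and> K \<bar>c\<bar>"
proof -
  have k: "K x \<Longrightarrow> K \<bar>x\<bar>" "K (-x) \<Longrightarrow> K \<bar>x\<bar>" for x unfolding K_def by auto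
  from assms(1)[unfolded Vs_iff] show ?thesis using Orb_K[OF _ assms(2)] k by blast
qed

lemma lemA: assumes "(a,c) \<in> Orb q" "q \<ge> 3" shows "vec2 (a - lambda_q q * c) c \<in> Vs q"
  using assms(1)
proof (cases rule: Orb.cases)
  case e1 then show ?thesis by (simp add: Vs_iff Orb.e1)
next
  case e2
  have "(sq q (q-1) * 1 + sq q (q-1+1) * 0, sq q (q-1-1) * 1 + sq q (q-1) * 0) \<in> Orb q"
    using assms(2) by (intro Orb.M Orb.e1) auto
  moreover have "sq q (q-1-1) = lambda_q q"
    using sqqm2[of q] assms(2) by (simp add: diff_diff_add numeral_2_eq_2)
  ultimately have "(1, lambda_q q) \<in> Orb q" using sqq1[of q] assms(2) by simp
  then show ?thesis using e2 by (simp add: Vs_iff)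
next
  case (M a' c' j)
  show ?thesis
  proof (cases "j = 1")
    case True
    then show ?thesis using M assms(2) sq1[of q] sq2[of q, unfolded numeral_2_eq_2] by (simp add: Vs_iff algebra_simps)
  next
    case False
    then obtain i where i: "j = i + 2" using M by (metis add.commute le_Suc_ex le_antisym one_add_one add_Suc_right plus_1_eq_Suc not_less_eq_eq Suc_1)
    have r1: "sq q (i+2) + sq q i = lambda_q q * sq q (i+1)" by (rule sq_rec)
    have r2: "sq q (i+3) + sq q (i+1) = lambda_q q * sq q (i+2)" using sq_rec[of q "i+1"] by (simp add: numeral_3_eq_3 numeral_2_eq_2)
    have "(sq q (i+1) * a' + sq q (i+1+1) * c', sq q (i+1-1) * a' + sq q (i+1) * c') \<in> Orb q"
      using M i by (intro Orb.M) auto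
    then have orb: "(sq q (i+1) * a' + sq q (i+2) * c', sq q i * a' + sq q (i+1) * c') \<in> Orb q"
      by (simp add: numeral_2_eq_2)
    have ea: "a = sq q (i+2) * a' + sq q (i+3) * c'" "c = sq q (i+1) * a' + sq q (i+2) * c'"
      using M i by (auto simp: algebra_simps numeral_2_eq_2 numeral_3_eq_3)
    have f1: "sq q (i+2) - lambda_q q * sq q (i+1) = - sq q i" using r1 by linarith
    have f2: "sq q (i+3) - lambda_q q * sq q (i+2) = - sq q (i+1)" using r2 by linarith
    have "a - lambda_q q * c = (sq q (i+2) - lambda_q q * sq q (i+1)) * a' + (sq q (i+3) - lambda_q q * sq q (i+2)) * c'"
      unfolding ea by (simp add: algebra_simps)
    then have "a - lambda_q q * c = - (sq q i * a' + sq q (i+1) * c')"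
      using f1 f2 by simp
    then have "(c, -(a - lambda_q q * c)) = (sq q (i+1) * a' + sq q (i+2) * c', sq q i * a' + sq q (i+1) * c')"
      using ea(2) by simp
    then have "(c, -(a - lambda_q q * c)) \<in> Orb q" using orb by (simp only:)
    then show ?thesis unfolding Vs_iff by blast
  qed
qed

lemma lemB: assumes "(a,c) \<in> Orb q" "q \<ge> 3" shows "vec2 (lambda_q q * a - c) a \<in> Vs q"
  using assms(1)
proof (cases rule: Orb.cases)
  case e1
  have "(sq q 1 * 0 + sq q (1+1) * 1, sq q (1-1) * 0 + sq q 1 * 1) \<in> Orb q"
    using assms(2) by (intro Orb.M Orb.e2) auto
  then show ?thesis using e1 sq1[of q] sq2[of q] assms(2) by (simp add: Vs_iff numeral_2_eq_2)
next
  case e2 then show ?thesis by (simp add: Vs_iff Orb.e1)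
next
  case (M a' c' j)
  then obtain i where i: "j = i + 1" by (metis add.commute le_Suc_ex plus_1_eq_Suc)
  have r1: "sq q (i+2) + sq q i = lambda_q q * sq q (i+1)" by (rule sq_rec)
  have r2: "sq q (i+3) + sq q (i+1) = lambda_q q * sq q (i+2)" using sq_rec[of q "i+1"] by (simp add: numeral_3_eq_3 numeral_2_eq_2)
  have ea: "a = sq q (i+1) * a' + sq q (i+2) * c'" "c = sq q i * a' + sq q (i+1) * c'"
    using M i by (auto simp: algebra_simps numeral_2_eq_2)
  have f1: "lambda_q q * sq q (i+1) - sq q i = sq q (i+2)" using r1 by linarith
  have f2: "lambda_q q * sq q (i+2) - sq q (i+1) = sq q (i+3)" using r2 by linarith
  have "lambda_q q * a - c = (lambda_q q * sq q (i+1) - sq q i) * a' + (lambda_q q * sq q (i+2) - sq q (i+1)) * c'"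
    unfolding ea by (simp add: algebra_simps)
  then have e: "lambda_q q * a - c = sq q (i+2) * a' + sq q (i+3) * c'"
     "a = sq q (i+1) * a' + sq q (i+2) * c'" using ea f1 f2 by simp_all
  show ?thesis
  proof (cases "j + 1 \<le> q - 1")
    case True
    have "(sq q (i+2) * a' + sq q (i+2+1) * c', sq q (i+2-1) * a' + sq q (i+2) * c') \<in> Orb q"
      using M i True by (intro Orb.M) auto
    then show ?thesis using e by (simp add: Vs_iff numeral_3_eq_3 numeral_2_eq_2)
  next
    case False
    then have "i + 2 = q" using M i by linarith
    then have "sq q (i+2) = 0" "sq q (i+3) = -1" "sq q (i+1) = 1"
      using sqq[of q] sqSq[of q] sqq1[of q] assms(2) by (auto simp: numeral_3_eq_3 numeral_2_eq_2)
    then show ?thesis using e M by (simp add: Vs_iff)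
  qed
qed

lemma lemC: assumes "(a,c) \<in> Orb q" "q \<ge> 3" shows "(a + lambda_q q * c, c) \<in> Orb q"
proof -
  have "(sq q 1 * a + sq q (1+1) * c, sq q (1-1) * a + sq q 1 * c) \<in> Orb q"
    using assms by (intro Orb.M) auto
  then show ?thesis using sq1[of q] sq2[of q] assms(2) by (simp add: numeral_2_eq_2)
qed

lemma lemD: assumes "(a,c) \<in> Orb q" "q \<ge> 3" shows "(a, lambda_q q * a + c) \<in> Orb q"
proof -
  have "(sq q (q-1) * a + sq q (q-1+1) * c, sq q (q-1-1) * a + sq q (q-1) * c) \<in> Orb q"
    using assms by (intro Orb.M) auto
  moreover have "sq q (q-1-1) = lambda_q q"
    using sqqm2[of q] assms(2) by (simp add: diff_diff_add numeral_2_eq_2)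
  ultimately show ?thesis using sqq1[of q] sqq[of q] assms(2) by simp
qed

lemma Vs_closed:
  assumes "A \<in> hecke_group q" "q \<ge> 3" "v \<in> Vs q"
  shows "A *v v \<in> Vs q"
  using assms(1,3)
proof (induction arbitrary: v rule: hecke_group.induct)
  case one then show ?case by simp
next
  case S
  obtain a c where v: "v = vec2 a c" by (metis vec2_eta)
  show ?case using S v by (auto simp: S_mat_def mat2_vec2 Vs_iff)
next
  case S_inv
  obtain a c where v: "v = vec2 a c" by (metis vec2_eta)
  show ?case using S_inv v by (auto simp: S_inv' S_mat_def mat2_vec2 Vs_iff)
next
  case T
  obtain a c where v: "v = vec2 a c" by (metis vec2_eta)
  have neg: "vec2 x y \<in> Vs q \<Longrightarrow> vec2 (-x) (-y) \<in> Vs q" for x y by (auto simp: Vs_iff)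
  from T v consider "(a,c) \<in> Orb q" | "(-a,-c) \<in> Orb q" | "(c,-a) \<in> Orb q" | "(-c,a) \<in> Orb q"
    by (auto simp: Vs_iff)
  then show ?case
  proof cases
    case 1 then show ?thesis using lemC[OF 1 assms(2)] v by (simp add: T_mat_def mat2_vec2 Vs_iff algebra_simps)
  next
    case 2 then show ?thesis using lemC[OF 2 assms(2)] v by (simp add: T_mat_def mat2_vec2 Vs_iff algebra_simps)
  next
    case 3 then show ?thesis using lemB[OF 3 assms(2)] v by (simp add: T_mat_def mat2_vec2 algebra_simps)
  next
    case 4 then show ?thesis using neg[OF lemB[OF 4 assms(2)]] v by (simp add: T_mat_def mat2_vec2 algebra_simps)
  qed
next
  case T_inv
  obtain a c where v: "v = vec2 a c" by (metis vec2_eta)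
  have neg: "vec2 x y \<in> Vs q \<Longrightarrow> vec2 (-x) (-y) \<in> Vs q" for x y by (auto simp: Vs_iff)
  from T_inv v consider "(a,c) \<in> Orb q" | "(-a,-c) \<in> Orb q" | "(c,-a) \<in> Orb q" | "(-c,a) \<in> Orb q"
    by (auto simp: Vs_iff)
  then show ?case
  proof cases
    case 1 then show ?thesis using lemA[OF 1 assms(2)] v by (simp add: Submission.T_inv mat2_vec2 algebra_simps)
  next
    case 2 then show ?thesis using neg[OF lemA[OF 2 assms(2)]] v by (simp add: Submission.T_inv mat2_vec2 algebra_simps)
  next
    case 3 then show ?thesis using lemD[OF 3 assms(2)] v by (simp add: Submission.T_inv mat2_vec2 Vs_iff algebra_simps)
  next
    case 4 then show ?thesis using lemD[OF 4 assms(2)] v by (simp add: Submission.T_inv mat2_vec2 Vs_iff algebra_simps)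
  qed
next
  case (mult A B) then show ?case by (simp add: matrix_vector_mul_assoc[symmetric])
qed

lemma Lambda_K: assumes "vec2 a c \<in> Lambda_q q" "q \<ge> 3" shows "K \<bar>a\<bar> \<and> K \<bar>c\<bar>"
proof -
  obtain g where g: "g \<in> hecke_group q" "vec2 a c = g *v vec2 1 0" using assms(1) unfolding Lambda_q_def by auto
  have "vec2 1 0 \<in> Vs q" by (simp add: Vs_iff Orb.e1)
  then have "vec2 a c \<in> Vs q" using Vs_closed[OF g(1) assms(2)] g(2) by simp
  then show ?thesis using Vs_K assms(2) by blast
qed


abbreviation "e1 \<equiv> vec2 1 0"

lemma Lam_mem: "g \<in> hecke_group q \<Longrightarrow> g *v e1 \<in> Lambda_q q"
  unfolding Lambda_q_def by auto

lemma mat_image_mult: "mat_image (A ** B) X = mat_image A (mat_image B X)"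
  unfolding mat_image_def by (auto simp: matrix_vector_mul_assoc[symmetric] image_iff)

lemma G_Lam: assumes "g \<in> hecke_group q" shows "mat_image g (Lambda_q q) = Lambda_q q"
proof
  show "mat_image g (Lambda_q q) \<subseteq> Lambda_q q"
    unfolding mat_image_def Lambda_q_def using assms
    by (auto simp: matrix_vector_mul_assoc intro: hecke_group.mult)
  show "Lambda_q q \<subseteq> mat_image g (Lambda_q q)"
  proof
    fix v assume "v \<in> Lambda_q q"
    then obtain h where h: "h \<in> hecke_group q" "v = h *v e1" unfolding Lambda_q_def by auto
    have "v = g *v ((inv2 g ** h) *v e1)"
      using h(2) inv2_right[OF G_det[OF assms]] by (simp add: matrix_vector_mul_assoc matrix_mul_assoc)
    moreover have "(inv2 g ** h) *v e1 \<in> Lambda_q q"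
      by (rule Lam_mem) (intro hecke_group.mult G_inv assms h(1))
    ultimately show "v \<in> mat_image g (Lambda_q q)" unfolding mat_image_def by auto
  qed
qed

lemma e1_Lam: "e1 \<in> Lambda_q q" using Lam_mem[OF hecke_group.one] by simp
lemma e2_Lam: "vec2 0 1 \<in> Lambda_q q" using Lam_mem[OF S_G, of q] by (simp add: mat2_vec2)

lemma L_x: assumes q: "q \<ge> 3" and x: "vec2 x 1 \<in> Lambda_q q"
  shows "\<exists>m::int. x = real_of_int m * lambda_q q"
proof -
  define l where "l = lambda_q q"
  have l: "1 \<le> l" "l < 2" using lambda_bounds[OF q] l_def by auto
  obtain k where k: "k \<in> hecke_group q" "vec2 x 1 = k *v e1" using x unfolding Lambda_q_def by auto
  define m where "m = \<lfloor>x / l + 1/2\<rfloor>"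
  have m1: "real_of_int m \<le> x / l + 1/2" "x / l + 1/2 < real_of_int m + 1" unfolding m_def by linarith+
  have "real_of_int m * l \<le> x + l/2" using m1(1) l by (simp add: field_simps)
  moreover have "x - l/2 < real_of_int m * l" using m1(2) l by (simp add: field_simps)
  ultimately have yb: "\<bar>x - real_of_int m * l\<bar> < 1" using l by linarith
  have P: "mat2 0 (-1) 1 0 ** (mat2 1 (real_of_int (-m) * l) 0 1 ** k) \<in> hecke_group q"
    using S_G Tpow k(1) l_def by (blast intro: hecke_group.mult)
  have "(mat2 0 (-1) 1 0 ** (mat2 1 (real_of_int (-m) * l) 0 1 ** k)) *v e1 = vec2 (-1) (x - real_of_int m * l)"
    by (simp add: matrix_vector_mul_assoc[symmetric] k(2)[symmetric] mat2_vec2 algebra_simps)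
  then have "vec2 (-1) (x - real_of_int m * l) \<in> Lambda_q q" using Lam_mem[OF P] by simp
  then have "K \<bar>x - real_of_int m * l\<bar>" using Lambda_K q by blast
  then have "x = real_of_int m * l" using yb unfolding K_def by auto
  then show ?thesis unfolding l_def by blast
qed

lemma SL2_iff: "A \<in> SL2 \<longleftrightarrow> det A = 1" by (simp add: SL2_def)

lemma P1: assumes q: "q \<ge> 3" and A: "A \<in> SL2"
  and h1: "e1 \<in> mat_image A (Lambda_q q)" and h2: "vec2 0 1 \<in> mat_image A (Lambda_q q)"
  shows "A \<in> hecke_group q"
proof -
  obtain g where g: "g \<in> hecke_group q" "e1 = A *v (g *v e1)"
    using h1 unfolding mat_image_def Lambda_q_def by auto
  obtain h where h: "h \<in> hecke_group q" "vec2 0 1 = A *v (h *v e1)"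
    using h2 unfolding mat_image_def Lambda_q_def by auto
  define P where "P = A ** g"
  have dP: "det P = 1" using A G_det[OF g(1)] by (simp add: P_def det_mul SL2_iff)
  have Pe: "P *v e1 = e1" using g(2) by (simp add: P_def matrix_vector_mul_assoc)
  have "P *v e1 = vec2 (P$1$1) (P$2$1)" by (subst mat2_eta[of P]) (simp add: mat2_vec2)
  then have p11: "P$1$1 = 1" and p21: "P$2$1 = 0" using Pe by (simp_all add: vec2_eq_iff)
  have p22: "P$2$2 = 1" using dP p11 p21 by (simp add: det_2)
  define x where "x = P$1$2"
  have Peq: "P = mat2 1 x 0 1" using p11 p21 p22 x_def mat2_eta[of P] by simp
  define k where "k = inv2 g ** h"
  have kG: "k \<in> hecke_group q" unfolding k_def by (intro hecke_group.mult G_inv g(1) h(1))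
  have gi: "g ** inv2 g = mat 1" using inv2_right[OF G_det[OF g(1)]] .
  have "P *v (k *v e1) = A *v (h *v e1)"
    unfolding P_def k_def by (simp add: matrix_vector_mul_assoc matrix_mul_assoc[symmetric]) (simp add: matrix_mul_assoc gi)
  then have Pk: "P *v (k *v e1) = vec2 0 1" using h(2) by simp
  obtain u w where uw: "k *v e1 = vec2 u w" by (metis vec2_eta)
  have "vec2 (u + x * w) w = vec2 0 1" using Pk uw Peq by (simp add: mat2_vec2)
  then have "w = 1" "u = -x" by (auto simp: vec2_eq_iff)
  then have "vec2 (-x) 1 \<in> Lambda_q q" using Lam_mem[OF kG] uw by simp
  then obtain m where m: "-x = real_of_int m * lambda_q q" using L_x q by blast
  have "x = - (real_of_int m * lambda_q q)" using m by linarith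
  then have "P = mat2 1 (real_of_int (-m) * lambda_q q) 0 1" using Peq by simp
  then have PG: "P \<in> hecke_group q" using Tpow[of "-m" q] by simp
  have "A = P ** inv2 g" unfolding P_def by (simp add: matrix_mul_assoc[symmetric] gi)
  then show ?thesis using PG G_inv[OF g(1)] by (simp add: hecke_group.mult)
qed

lemma P2: assumes q: "q \<ge> 3" and B: "B \<in> SL2"
  shows "mat_image B (Lambda_q q) = Lambda_q q \<longleftrightarrow> B \<in> hecke_group q"
  using P1[OF q B] e1_Lam e2_Lam G_Lam by metis

lemma coset_G: assumes "B \<in> hecke_group q" shows "(\<lambda>g. B ** g) ` hecke_group q = hecke_group q"
proof
  show "(\<lambda>g. B ** g) ` hecke_group q \<subseteq> hecke_group q" using assms by (auto intro: hecke_group.mult)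
  show "hecke_group q \<subseteq> (\<lambda>g. B ** g) ` hecke_group q"
  proof
    fix g assume g: "g \<in> hecke_group q"
    have "g = B ** (inv2 B ** g)" using inv2_right[OF G_det[OF assms]] by (simp add: matrix_mul_assoc)
    moreover have "inv2 B ** g \<in> hecke_group q" by (intro hecke_group.mult G_inv assms g)
    ultimately show "g \<in> (\<lambda>g. B ** g) ` hecke_group q" by blast
  qed
qed

lemma P3: assumes q: "q \<ge> 3" and C: "C \<in> SL2" and D: "D \<in> SL2"
  shows "mat_image C (Lambda_q q) = mat_image D (Lambda_q q)
         \<longleftrightarrow> left_coset C (hecke_group q) = left_coset D (hecke_group q)"
proof
  assume eq: "mat_image C (Lambda_q q) = mat_image D (Lambda_q q)"
  define B where "B = inv2 D ** C"
  have dD: "det D = 1" using D by (simp add: SL2_iff)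
  have "det (inv2 D) = det D" by (simp add: inv2_def det_2 algebra_simps)
  then have BS: "B \<in> SL2" using C dD by (simp add: B_def SL2_iff det_mul)
  have "mat_image B (Lambda_q q) = mat_image (inv2 D ** D) (Lambda_q q)"
    unfolding B_def mat_image_mult eq ..
  also have "\<dots> = Lambda_q q" using inv2_left[OF dD] by (simp add: mat_image_def)
  finally have BG: "B \<in> hecke_group q" using P2[OF q BS] by simp
  have CDB: "C = D ** B" unfolding B_def by (simp add: matrix_mul_assoc inv2_right[OF dD])
  show "left_coset C (hecke_group q) = left_coset D (hecke_group q)"
    unfolding left_coset_def CDB using coset_G[OF BG]
    by (metis (no_types, lifting) image_cong image_image matrix_mul_assoc)
next
  assume eq: "left_coset C (hecke_group q) = left_coset D (hecke_group q)"
  have "C \<in> left_coset C (hecke_group q)" unfolding left_coset_def using hecke_group.one by force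
  then obtain g where g: "g \<in> hecke_group q" "C = D ** g" using eq unfolding left_coset_def by auto
  show "mat_image C (Lambda_q q) = mat_image D (Lambda_q q)"
    unfolding g(2) mat_image_mult G_Lam[OF g(1)] ..
qed

lemma P5: assumes B: "B \<in> SL2" and a: "a > 0" and v: "vec2 a 0 \<in> mat_image B (Lambda_q q)"
  shows "\<exists>b. mat_image B (Lambda_q q) = mat_image (g_ab a b) (Lambda_q q)"
proof -
  obtain h where h: "h \<in> hecke_group q" "vec2 a 0 = B *v (h *v e1)"
    using v unfolding mat_image_def Lambda_q_def by auto
  define P where "P = B ** h"
  have dP: "det P = 1" using B G_det[OF h(1)] by (simp add: P_def det_mul SL2_iff)
  have Pe: "P *v e1 = vec2 a 0" using h(2) by (simp add: P_def matrix_vector_mul_assoc)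
  have "P *v e1 = vec2 (P$1$1) (P$2$1)" by (subst mat2_eta[of P]) (simp add: mat2_vec2)
  then have p11: "P$1$1 = a" and p21: "P$2$1 = 0" using Pe by (simp_all add: vec2_eq_iff)
  have "a * P$2$2 = 1" using dP p11 p21 by (simp add: det_2)
  then have p22: "P$2$2 = inverse a" using a by (simp add: field_simps)
  have "P = g_ab a (P$1$2)" unfolding g_ab_def using p11 p21 p22 mat2_eta[of P] by simp
  moreover have "mat_image B (Lambda_q q) = mat_image P (Lambda_q q)"
    unfolding P_def mat_image_mult G_Lam[OF h(1)] ..
  ultimately show ?thesis by metis
qed

theorem mainTheorem4:
  fixes q :: nat
  assumes "q \<ge> 3"
  shows "(\<forall>A \<in> SL2. vec2 1 0 \<in> mat_image A (Lambda_q q) \<and> vec2 0 1 \<in> mat_image A (Lambda_q q)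
            \<longrightarrow> A \<in> hecke_group q \<and> mat_image A (Lambda_q q) = Lambda_q q)
       \<and> (\<forall>B \<in> SL2. mat_image B (Lambda_q q) = Lambda_q q \<longleftrightarrow> B \<in> hecke_group q)
       \<and> (\<forall>C \<in> SL2. \<forall>D \<in> SL2. mat_image C (Lambda_q q) = mat_image D (Lambda_q q)
            \<longleftrightarrow> left_coset C (hecke_group q) = left_coset D (hecke_group q))
       \<and> (\<exists>f. bij_betw f {mat_image C (Lambda_q q) | C. C \<in> SL2}
                         {left_coset C (hecke_group q) | C. C \<in> SL2}
             \<and> (\<forall>C \<in> SL2. f (mat_image C (Lambda_q q)) = left_coset C (hecke_group q)))
       \<and> (\<forall>B \<in> SL2. \<forall>a > 0. vec2 a 0 \<in> mat_image B (Lambda_q q)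
            \<longrightarrow> (\<exists>b. mat_image B (Lambda_q q) = mat_image (g_ab a b) (Lambda_q q)))"
proof (intro conjI)
  show "\<forall>A \<in> SL2. vec2 1 0 \<in> mat_image A (Lambda_q q) \<and> vec2 0 1 \<in> mat_image A (Lambda_q q)
            \<longrightarrow> A \<in> hecke_group q \<and> mat_image A (Lambda_q q) = Lambda_q q"
    using P1[OF assms] G_Lam by blast
  show "\<forall>B \<in> SL2. mat_image B (Lambda_q q) = Lambda_q q \<longleftrightarrow> B \<in> hecke_group q"
    using P2[OF assms] by blast
  show "\<forall>C \<in> SL2. \<forall>D \<in> SL2. mat_image C (Lambda_q q) = mat_image D (Lambda_q q)
            \<longleftrightarrow> left_coset C (hecke_group q) = left_coset D (hecke_group q)"
    using P3[OF assms] by blast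
  show "\<forall>B \<in> SL2. \<forall>a > 0. vec2 a 0 \<in> mat_image B (Lambda_q q)
            \<longrightarrow> (\<exists>b. mat_image B (Lambda_q q) = mat_image (g_ab a b) (Lambda_q q))"
    using P5 by blast
  define f where "f X = left_coset (SOME C. C \<in> SL2 \<and> X = mat_image C (Lambda_q q)) (hecke_group q)" for X
  have fC: "f (mat_image C (Lambda_q q)) = left_coset C (hecke_group q)" if C: "C \<in> SL2" for C
  proof -
    have ex: "\<exists>C'. C' \<in> SL2 \<and> mat_image C (Lambda_q q) = mat_image C' (Lambda_q q)" using C by blast
    define C' where "C' = (SOME C'. C' \<in> SL2 \<and> mat_image C (Lambda_q q) = mat_image C' (Lambda_q q))"
    have C': "C' \<in> SL2 \<and> mat_image C (Lambda_q q) = mat_image C' (Lambda_q q)"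
      unfolding C'_def by (rule someI_ex[OF ex])
    have "f (mat_image C (Lambda_q q)) = left_coset C' (hecke_group q)" unfolding f_def C'_def ..
    also have "\<dots> = left_coset C (hecke_group q)" using P3[OF assms C] C' by metis
    finally show ?thesis .
  qed
  show "\<exists>f. bij_betw f {mat_image C (Lambda_q q) | C. C \<in> SL2}
                         {left_coset C (hecke_group q) | C. C \<in> SL2}
             \<and> (\<forall>C \<in> SL2. f (mat_image C (Lambda_q q)) = left_coset C (hecke_group q))"
  proof (intro exI conjI ballI)
    show "f (mat_image C (Lambda_q q)) = left_coset C (hecke_group q)" if "C \<in> SL2" for C
      using fC that .
    show "bij_betw f {mat_image C (Lambda_q q) | C. C \<in> SL2} {left_coset C (hecke_group q) | C. C \<in> SL2}"
      unfolding bij_betw_def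
    proof
      show "inj_on f {mat_image C (Lambda_q q) | C. C \<in> SL2}"
      proof (rule inj_onI)
        fix X Y assume "X \<in> {mat_image C (Lambda_q q) | C. C \<in> SL2}" "Y \<in> {mat_image C (Lambda_q q) | C. C \<in> SL2}" "f X = f Y"
        then obtain C D where "C \<in> SL2" "D \<in> SL2" "X = mat_image C (Lambda_q q)" "Y = mat_image D (Lambda_q q)"
          "f X = f Y" by blast
        then show "X = Y" using fC P3[OF assms] by metis
      qed
      show "f ` {mat_image C (Lambda_q q) | C. C \<in> SL2} = {left_coset C (hecke_group q) | C. C \<in> SL2}"
        using fC by (auto simp: image_iff)
    qed
  qed
qed

end
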